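(* Let $K, C \in \mathbb{N}$ be positive integers, let $p \in \mathbb{Q}_{>0}$, let $q_1, q_2 \in \mathbb{Q}$, and let $\varphi, \psi : \mathbb{Q} \to \mathbb{Z}$ be functions that are antiperiodic with antiperiod $C$ on the grid $\frac{C}{K}\mathbb{Z}$, i.e. $\varphi(x + C) = -\varphi(x)$ and $\psi(x+C) = -\psi(x)$ for all $x \in \frac{C}{K}\mathbb{Z}$. For nonzero $x \in \frac{1}{K}\mathbb{Z}$ define \[ s_d(x) = \frac{p^x + q_1 \varphi(Cx) + q_2 \psi(Cx)}{x}, \] where $p^x$ denotes the positive real power. Let $t = \frac{i}{K}$ with $i \in \mathbb{Z}\setminus\{0\}$, and let $u, v$ be nonnegative integers such that the four points $t,\ t+2v+1,\ t+2u,\ t+2u+2v+1$ are all nonzero. Put \[ s_0 = s_d(t),\quad s_1 = s_d(t+2v+1),\quad s_2 = s_d(t+2u),\quad s_3 = s_d(t+2u+2v+1). \] Then \[ \frac{s_0 \cdot t + s_1 \cdot (t + 2v + 1)}{s_2 \cdot (t + 2u) + s_3 \cdot (t + 2u + 2v + 1)} = \frac{1}{p^{2u}}. \]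
   Context: The functions $\varphi,\psi$ play the role of discrete "oscillators"; antiperiodicity with antiperiod $C$ means a shift of the argument by $C$ flips the sign. The function $s_d$ is called the discrete generating function. *)

theory Defs
  imports Complex_Main
begin

definition s_d :: "rat \<Rightarrow> rat \<Rightarrow> rat \<Rightarrow> nat \<Rightarrow> (rat \<Rightarrow> int) \<Rightarrow> (rat \<Rightarrow> int) \<Rightarrow> rat \<Rightarrow> real" where
  "s_d p q1 q2 C \<phi> \<psi> x =
     (real_of_rat p powr real_of_rat x
       + real_of_rat q1 * real_of_int (\<phi> (of_nat C * x))
       + real_of_rat q2 * real_of_int (\<psi> (of_nat C * x))) / real_of_rat x"

definition antiperiodic_on_grid :: "nat \<Rightarrow> nat \<Rightarrow> (rat \<Rightarrow> int) \<Rightarrow> bool" where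
  "antiperiodic_on_grid K C f \<longleftrightarrow>
     (\<forall>j::int. f (of_int j * of_nat C / of_nat K + of_nat C) = - f (of_int j * of_nat C / of_nat K))"

end

theory Submission
  imports Defs
begin

lemma anti_iter:
  assumes "K > 0" "antiperiodic_on_grid K C f"
  shows "f (of_int j * of_nat C / of_nat K + of_nat n * of_nat C) = (-1)^n * f (of_int j * of_nat C / of_nat K)"
proof (induction n)
  case 0
  then show ?case by simp
next
  case (Suc n)
  have e: "of_int j * of_nat C / of_nat K + of_nat n * of_nat C
      = of_int (j + int n * int K) * of_nat C / (of_nat K :: rat)"
    using assms(1) by (simp add: field_simps)
  have "f (of_int j * of_nat C / of_nat K + of_nat (Suc n) * of_nat C)
      = f (of_int (j + int n * int K) * of_nat C / of_nat K + of_nat C)"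
    using e by (simp add: algebra_simps)
  also have "\<dots> = - f (of_int (j + int n * int K) * of_nat C / of_nat K)"
    using assms(2) unfolding antiperiodic_on_grid_def by blast
  also have "\<dots> = - f (of_int j * of_nat C / of_nat K + of_nat n * of_nat C)"
    using e by simp
  finally show ?case using Suc by simp
qed

theorem mainTheorem1:
  fixes K C u v :: nat and p q1 q2 :: rat and \<phi> \<psi> :: "rat \<Rightarrow> int" and i :: int and t :: rat
  assumes "K > 0" and "C > 0" and "p > 0"
    and "antiperiodic_on_grid K C \<phi>" and "antiperiodic_on_grid K C \<psi>"
    and "i \<noteq> 0" and "t = of_int i / of_nat K"
    and "t \<noteq> 0" and "t + 2 * of_nat v + 1 \<noteq> 0" and "t + 2 * of_nat u \<noteq> 0"
    and "t + 2 * of_nat u + 2 * of_nat v + 1 \<noteq> 0"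
  shows "(s_d p q1 q2 C \<phi> \<psi> t * real_of_rat t
          + s_d p q1 q2 C \<phi> \<psi> (t + 2 * of_nat v + 1) * real_of_rat (t + 2 * of_nat v + 1))
        / (s_d p q1 q2 C \<phi> \<psi> (t + 2 * of_nat u) * real_of_rat (t + 2 * of_nat u)
          + s_d p q1 q2 C \<phi> \<psi> (t + 2 * of_nat u + 2 * of_nat v + 1)
              * real_of_rat (t + 2 * of_nat u + 2 * of_nat v + 1))
      = 1 / real_of_rat p powr (2 * real u)"
proof -
  define g where "g = of_int i * of_nat C / (of_nat K :: rat)"
  have ct: "of_nat C * t = g" using assms(7) by (simp add: g_def)
  have c1: "of_nat C * (t + 2 * of_nat v + 1) = g + of_nat (2*v+1) * of_nat C"
    using ct by (simp add: algebra_simps)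
  have c2: "of_nat C * (t + 2 * of_nat u) = g + of_nat (2*u) * of_nat C"
    using ct by (simp add: algebra_simps)
  have c3: "of_nat C * (t + 2 * of_nat u + 2 * of_nat v + 1) = g + of_nat (2*u+2*v+1) * of_nat C"
    using ct by (simp add: algebra_simps)
  have A: "\<And>f n. antiperiodic_on_grid K C f \<Longrightarrow> f (g + of_nat n * of_nat C) = (-1)^n * f g"
    unfolding g_def using anti_iter assms(1) by blast
  have sx: "\<And>x. x \<noteq> 0 \<Longrightarrow> s_d p q1 q2 C \<phi> \<psi> x * real_of_rat x =
      real_of_rat p powr real_of_rat x + real_of_rat q1 * real_of_int (\<phi> (of_nat C * x))
       + real_of_rat q2 * real_of_int (\<psi> (of_nat C * x))"
    unfolding s_d_def by simp
  define P where "P = real_of_rat p"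
  have Ppos: "P > 0" using assms(3) by (simp add: P_def)
  have pw: "\<And>a b. P powr real_of_rat (a + b) = P powr real_of_rat a * P powr real_of_rat b"
    by (simp add: of_rat_add powr_add)
  have N: "s_d p q1 q2 C \<phi> \<psi> t * real_of_rat t
          + s_d p q1 q2 C \<phi> \<psi> (t + 2 * of_nat v + 1) * real_of_rat (t + 2 * of_nat v + 1)
      = P powr real_of_rat t + P powr real_of_rat (t + 2 * of_nat v + 1)"
    using sx[OF assms(8)] sx[OF assms(9)] ct c1 A[OF assms(4), of "2*v+1"] A[OF assms(5), of "2*v+1"]
    by (simp add: P_def)
  have D: "s_d p q1 q2 C \<phi> \<psi> (t + 2 * of_nat u) * real_of_rat (t + 2 * of_nat u)
          + s_d p q1 q2 C \<phi> \<psi> (t + 2 * of_nat u + 2 * of_nat v + 1)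
              * real_of_rat (t + 2 * of_nat u + 2 * of_nat v + 1)
      = P powr real_of_rat (t + 2 * of_nat u) + P powr real_of_rat (t + 2 * of_nat u + 2 * of_nat v + 1)"
    using sx[OF assms(10)] sx[OF assms(11)] c2 c3 A[OF assms(4), of "2*u"] A[OF assms(5), of "2*u"]
       A[OF assms(4), of "2*u+2*v+1"] A[OF assms(5), of "2*u+2*v+1"]
    by (simp add: P_def)
  have e1: "t + 2 * of_nat u = (2 * of_nat u) + t" by simp
  have e2: "t + 2 * of_nat u + 2 * of_nat v + 1 = (2 * of_nat u) + (t + 2 * of_nat v + 1)" by simp
  have r: "real_of_rat (2 * of_nat u) = 2 * real u" by (simp add: of_rat_mult)
  have D2: "P powr real_of_rat (t + 2 * of_nat u) + P powr real_of_rat (t + 2 * of_nat u + 2 * of_nat v + 1)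
     = P powr (2 * real u) * (P powr real_of_rat t + P powr real_of_rat (t + 2 * of_nat v + 1))"
    unfolding e1 e2 pw r by (simp add: algebra_simps)
  have pos: "P powr real_of_rat t + P powr real_of_rat (t + 2 * of_nat v + 1) > 0"
    using Ppos by (simp add: add_pos_pos)
  have pos2: "P powr (2 * real u) > 0" using Ppos by simp
  define Q where "Q = P powr real_of_rat t + P powr real_of_rat (t + 2 * of_nat v + 1)"
  have "Q / (P powr (2 * real u) * Q) = 1 / P powr (2 * real u)"
    using pos pos2 unfolding Q_def[symmetric] by simp
  then show ?thesis unfolding N D D2 P_def[symmetric] Q_def by simp
qed

end
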